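(* Let $n$ be a positive integer and let $G$ be any graph with at most $n$ vertices. Then $\chi_{td}(G) \leq 3^{\lceil \log_2 n\rceil}$.
   Context: All graphs are simple. For a graph $G$ and a positive integer $k$, a proper $k$-total difference labeling of $G$ is a function $f: V(G)\to\{1,\dots,k\}$, extended to edges by $f(\{u,v\}) = |f(u)-f(v)|$, such that: (i) adjacent vertices receive different labels; (ii) two distinct edges sharing a vertex receive different labels; (iii) no edge receives the same label as either of its endpoints; and all edge labels lie in $\{1,\dots,k\}$. $\chi_{td}(G)$ denotes the smallest $k$ for which $G$ has a proper $k$-total difference labeling. *)

theory Defs
  imports Complex_Main
begin

definition simple_graph :: "'a set \<Rightarrow> ('a \<Rightarrow> 'a \<Rightarrow> bool) \<Rightarrow> bool" where
  "simple_graph V E \<longleftrightarrow> finite V \<and>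
     (\<forall>u v. E u v \<longrightarrow> u \<in> V \<and> v \<in> V) \<and>
     (\<forall>u v. E u v \<longrightarrow> E v u) \<and>
     (\<forall>u. \<not> E u u)"

definition proper_td_labeling ::
  "'a set \<Rightarrow> ('a \<Rightarrow> 'a \<Rightarrow> bool) \<Rightarrow> nat \<Rightarrow> ('a \<Rightarrow> int) \<Rightarrow> bool" where
  "proper_td_labeling V E k f \<longleftrightarrow>
     (\<forall>v\<in>V. 1 \<le> f v \<and> f v \<le> int k) \<and>
     (\<forall>u v. E u v \<longrightarrow> 1 \<le> \<bar>f u - f v\<bar> \<and> \<bar>f u - f v\<bar> \<le> int k) \<and>
     (\<forall>u v. E u v \<longrightarrow> f u \<noteq> f v) \<and>
     (\<forall>u v w. E u v \<and> E u w \<and> v \<noteq> w \<longrightarrow> \<bar>f u - f v\<bar> \<noteq> \<bar>f u - f w\<bar>) \<and>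
     (\<forall>u v. E u v \<longrightarrow> \<bar>f u - f v\<bar> \<noteq> f u \<and> \<bar>f u - f v\<bar> \<noteq> f v)"

definition chi_td :: "'a set \<Rightarrow> ('a \<Rightarrow> 'a \<Rightarrow> bool) \<Rightarrow> nat" where
  "chi_td V E = (LEAST k. 0 < k \<and> (\<exists>f. proper_td_labeling V E k f))"

end

theory Submission
  imports Defs
begin

fun g :: "nat \<Rightarrow> nat" where
  "g x = (if x = 0 then 0 else x mod 2 + 3 * g (x div 2))"

declare g.simps[simp del]

lemma gx: "g x = x mod 2 + 3 * g (x div 2)"
  by (cases "x = 0") (simp_all add: g.simps[of x] g.simps[of 0])

lemma dig: "(a::nat) \<le> 1 \<Longrightarrow> b \<le> 1 \<Longrightarrow> c \<le> 1 \<Longrightarrow> a + b + 3*p = 2*c + 3*q \<Longrightarrow> a = c \<and> b = c"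
  by presburger

lemma arith1: "(X::nat) + Z = 2 * Y \<Longrightarrow> X = a + 3 * p \<Longrightarrow> Y = b + 3 * q \<Longrightarrow> Z = c + 3 * r
   \<Longrightarrow> a + c + 3 * (p + r) = 2 * b + 3 * (2 * q)"
  by simp

lemma arith2: "(a::nat) + c + 3 * (p + r) = 2 * b + 3 * (2 * q) \<Longrightarrow> a = b \<and> c = b \<Longrightarrow> p + r = 2 * q"
  by simp

lemma lt_aux: "\<not> (x::nat) + z = 0 \<Longrightarrow> s = x + z \<Longrightarrow> x div 2 + z div 2 < s"
  by linarith

lemma eq_aux: "(x::nat) div 2 = z div 2 \<Longrightarrow> x mod 2 = z mod 2 \<Longrightarrow> x = z"
  by (metis div_mult_mod_eq)

lemma g_ap_aux: "s = x + z \<Longrightarrow> g x + g z = 2 * g y \<Longrightarrow> x = z"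
proof (induction s arbitrary: x y z rule: less_induct)
  case (less s)
  have e: "x mod 2 + z mod 2 + 3 * (g (x div 2) + g (z div 2)) = 2 * (y mod 2) + 3 * (2 * g (y div 2))"
    using less.prems(2) gx[of x] gx[of y] gx[of z] by (rule arith1)
  have m: "x mod 2 = y mod 2 \<and> z mod 2 = y mod 2"
    by (rule dig[OF _ _ _ e]) auto
  with e have e2: "g (x div 2) + g (z div 2) = 2 * g (y div 2)" by (rule arith2)
  show ?case
  proof (cases "x + z = 0")
    case True
    then show ?thesis by simp
  next
    case False
    then have "x div 2 + z div 2 < s" using less.prems(1) by (rule lt_aux)
    from less.IH[OF this refl e2] have d: "x div 2 = z div 2" .
    from m have "x mod 2 = z mod 2" by simp
    with d show ?thesis by (rule eq_aux)
  qed
qed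

lemma g_ap: "g x + g z = 2 * g y \<Longrightarrow> x = z"
  using g_ap_aux by blast

lemma g_inj: "g x = g z \<Longrightarrow> x = z"
proof -
  assume h: "g x = g z"
  have "g x + g z = 2 * g x" using h by linarith
  then show "x = z" by (rule g_ap)
qed

lemma g_bound: "x < 2 ^ m \<Longrightarrow> 2 * g x + 1 \<le> 3 ^ m"
proof (induction m arbitrary: x)
  case 0
  then have "x = 0" by simp
  moreover have "g 0 = 0" by (simp add: g.simps[of 0])
  ultimately show ?case by simp
next
  case (Suc m)
  then have "x div 2 < 2 ^ m" by auto
  from Suc.IH[OF this] have "2 * g (x div 2) + 1 \<le> 3 ^ m" .
  moreover have "x mod 2 \<le> 1" by simp
  moreover have "g x = x mod 2 + 3 * g (x div 2)" by (rule gx)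
  ultimately show ?case by simp
qed

lemma n_le: assumes "0 < n" shows "n \<le> 2 ^ nat \<lceil>log 2 (real n)\<rceil>"
proof -
  have l0: "log 2 (real n) \<ge> 0" using assms by simp
  then have c0: "\<lceil>log 2 (real n)\<rceil> \<ge> 0" by simp
  have "real n = 2 powr log 2 (real n)" using assms by simp
  also have "\<dots> \<le> 2 powr real_of_int \<lceil>log 2 (real n)\<rceil>"
    by (rule powr_mono) auto
  also have "real_of_int \<lceil>log 2 (real n)\<rceil> = real (nat \<lceil>log 2 (real n)\<rceil>)" using c0 by simp
  also have "(2::real) powr real (nat \<lceil>log 2 (real n)\<rceil>) = 2 ^ nat \<lceil>log 2 (real n)\<rceil>"
    by (simp add: powr_realpow)
  finally have "real n \<le> real (2 ^ nat \<lceil>log 2 (real n)\<rceil>)" by simp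
  then show ?thesis by linarith
qed

lemma h1: "odd (N::nat) \<Longrightarrow> 2 * ((N + 1) div 2) = N + 1" by presburger
lemma h2: "(c::int) \<ge> 1 \<Longrightarrow> c \<le> a \<Longrightarrow> a \<le> K \<Longrightarrow> c \<le> b \<Longrightarrow> b \<le> K \<Longrightarrow> \<bar>a - b\<bar> \<le> K" by linarith
lemma h3: "(c::int) \<le> a \<Longrightarrow> a \<le> K \<Longrightarrow> c \<le> b \<Longrightarrow> b \<le> K \<Longrightarrow> 2 * c = K + 1 \<Longrightarrow> \<bar>a - b\<bar> < c" by linarith
lemma h4: "\<bar>(u::int) - v\<bar> = \<bar>u - w\<bar> \<Longrightarrow> v \<noteq> w \<Longrightarrow> v + w = 2 * u" by linarith

lemma labeling_exists:
  assumes sg: "simple_graph V E" and cv: "card V \<le> 2 ^ m"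
  shows "\<exists>f. proper_td_labeling V E (3 ^ m) f"
proof -
  have fin: "finite V" using sg unfolding simple_graph_def by blast
  have inV: "E u v \<Longrightarrow> u \<in> V \<and> v \<in> V" for u v using sg unfolding simple_graph_def by blast
  have irr: "\<not> E u u" for u using sg unfolding simple_graph_def by blast
  obtain h where hB: "h ` V \<subseteq> {..<(2::nat) ^ m}" and hi: "inj_on h V"
    using card_le_inj[OF fin, of "{..<(2::nat) ^ m}"] cv by auto
  define c :: nat where "c = (3 ^ m + 1) div 2"
  have odd3: "odd ((3::nat) ^ m)" by simp
  then have c2: "2 * c = 3 ^ m + 1" unfolding c_def by (rule h1)
  define f where "f v = int (c + g (h v))" for v
  have fr: "v \<in> V \<Longrightarrow> int c \<le> f v \<and> f v \<le> int (3 ^ m)" for v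
  proof -
    assume "v \<in> V"
    then have "h v < 2 ^ m" using hB by auto
    from g_bound[OF this] c2 have "c + g (h v) \<le> 3 ^ m" by linarith
    then have "int (c + g (h v)) \<le> int (3 ^ m)" by (simp only: of_nat_le_iff)
    then show ?thesis unfolding f_def by simp
  qed
  have c1: "int c \<ge> 1" using c2 by simp
  have fi: "u \<in> V \<Longrightarrow> v \<in> V \<Longrightarrow> f u = f v \<Longrightarrow> u = v" for u v
    unfolding f_def using g_inj hi by (simp add: inj_on_def)
  have P: "proper_td_labeling V E (3 ^ m) f"
    unfolding proper_td_labeling_def
  proof (intro conjI allI impI ballI)
    fix v assume "v \<in> V" then show "1 \<le> f v" "f v \<le> int (3 ^ m)" using fr[OF \<open>v \<in> V\<close>] c1 by linarith+
  next
    fix u v assume E: "E u v"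
    then have uv: "u \<in> V" "v \<in> V" "u \<noteq> v" using inV irr by auto
    then show ne: "f u \<noteq> f v" using fi by blast
    then show "1 \<le> \<bar>f u - f v\<bar>" by simp
    show "\<bar>f u - f v\<bar> \<le> int (3 ^ m)" using fr[OF uv(1)] fr[OF uv(2)] c1 h2 by blast
    have c2i: "2 * int c = int (3 ^ m) + 1" proof -
      have "int (2 * c) = int (3 ^ m + 1)" using c2 by (simp only:)
      then show ?thesis by simp
    qed
    have "\<bar>f u - f v\<bar> < int c" using fr[OF uv(1)] fr[OF uv(2)] c2i h3 by blast
    then show "\<bar>f u - f v\<bar> \<noteq> f u" "\<bar>f u - f v\<bar> \<noteq> f v"
      using fr[OF uv(1)] fr[OF uv(2)] by auto
  next
    fix u v w assume A: "E u v \<and> E u w \<and> v \<noteq> w"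
    then have V3: "u \<in> V" "v \<in> V" "w \<in> V" using inV by auto
    show "\<bar>f u - f v\<bar> \<noteq> \<bar>f u - f w\<bar>"
    proof
      assume eq: "\<bar>f u - f v\<bar> = \<bar>f u - f w\<bar>"
      have "f v \<noteq> f w" using fi V3 A by blast
      with eq have "f v + f w = 2 * f u" using h4 by blast
      then have "int (g (h v) + g (h w)) = int (2 * g (h u))" unfolding f_def by simp
      then have "g (h v) + g (h w) = 2 * g (h u)" by (simp only: of_nat_eq_iff)
      then have "h v = h w" by (rule g_ap)
      with hi V3 A show False by (auto simp: inj_on_def)
    qed
  qed
  then show ?thesis by blast
qed

theorem mainTheorem1:
  fixes V :: "'a set" and E :: "'a \<Rightarrow> 'a \<Rightarrow> bool" and n :: nat
  assumes "0 < n" and "simple_graph V E" and "card V \<le> n"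
  shows "chi_td V E \<le> 3 ^ nat \<lceil>log 2 (real n)\<rceil>"
proof -
  let ?m = "nat \<lceil>log 2 (real n)\<rceil>"
  have "card V \<le> 2 ^ ?m" using n_le[OF assms(1)] assms(3) by linarith
  from labeling_exists[OF assms(2) this] obtain f where "proper_td_labeling V E (3 ^ ?m) f" by blast
  then have "0 < (3::nat) ^ ?m \<and> (\<exists>f. proper_td_labeling V E (3 ^ ?m) f)" by auto
  then show ?thesis unfolding chi_td_def by (rule Least_le)
qed

end
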